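(* Let $d\ge2$ and let $\theta_{d0},\theta_{d-1,1},\dots,\theta_{0d}$ be real numbers with $\theta_{d0}\neq0$. Let $P(\theta)$ be the $(2d-2)\times(2d-2)$ matrix defined as follows: for $k=1,\dots,d-1$ and $m=0,\dots,d-1$, the entry in row $k$, column $k+m$ is $(d-m)\theta_{d-m,m}$; the entry in row $d-1+k$, column $k+m$ is $(m+1)\theta_{d-1-m,m+1}$; all other entries are $0$. (Thus the first $d-1$ rows are successive shifts of $(d\theta_{d0},(d-1)\theta_{d-1,1},\dots,2\theta_{2,d-2},\theta_{1,d-1})$ and the last $d-1$ rows are successive shifts of $(\theta_{d-1,1},2\theta_{d-2,2},\dots,d\theta_{0d})$.) Let $p(x;\theta)=\theta_{d0}x^d+\theta_{d-1,1}x^{d-1}+\dots+\theta_{1,d-1}x+\theta_{0d}$, and let $R(p,p')$ be the determinant of the $(2d-1)\times(2d-1)$ matrix whose first $d-1$ rows are successive shifts of the coefficient row $(\theta_{d0},\theta_{d-1,1},\dots,\theta_{0d})$ of $p$ and whose last $d$ rows are successive shifts of the coefficient row $(d\theta_{d0},(d-1)\theta_{d-1,1},\dots,\theta_{1,d-1})$ of $p'$ (each shift moving one column to the right, zeros elsewhere). Define $D(\theta)=R(p,p')/\theta_{d0}$. Then $$\det P(\theta)=d^{\,d-2}D(\theta).$$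
   Context: $D(\theta)$ is (the paper's normalization of) the discriminant of the polynomial equation $p(x;\theta)=0$; $P(\theta)$ is the coefficient matrix of the linear system determining the highest-order derivatives of the bivariate normalizing constant in the Pfaffian system. *)

theory Defs
  imports "Jordan_Normal_Form.Determinant"
begin

text \<open>Coefficients are given as a function th with th i j standing for theta_{i j};
  only the values with i + j = d are used.  Matrices are 0-indexed.\<close>

definition Pmat :: "nat \<Rightarrow> (nat \<Rightarrow> nat \<Rightarrow> real) \<Rightarrow> real mat" where
  "Pmat d th = mat (2*d-2) (2*d-2) (\<lambda>(r,c).
     if r < d - 1 then
       (if r \<le> c \<and> c - r \<le> d - 1 then real (d - (c - r)) * th (d - (c - r)) (c - r) else 0)
     else
       (let s = r - (d - 1) in
        if s \<le> c \<and> c - s \<le> d - 1 then real (c - s + 1) * th (d - 1 - (c - s)) (c - s + 1) else 0))"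

definition sylv_p_dp :: "nat \<Rightarrow> (nat \<Rightarrow> nat \<Rightarrow> real) \<Rightarrow> real mat" where
  "sylv_p_dp d th = mat (2*d-1) (2*d-1) (\<lambda>(r,c).
     if r < d - 1 then
       (if r \<le> c \<and> c - r \<le> d then th (d - (c - r)) (c - r) else 0)
     else
       (let s = r - (d - 1) in
        if s \<le> c \<and> c - s \<le> d - 1 then real (d - (c - s)) * th (d - (c - s)) (c - s) else 0))"

definition Rpdp :: "nat \<Rightarrow> (nat \<Rightarrow> nat \<Rightarrow> real) \<Rightarrow> real" where
  "Rpdp d th = det (sylv_p_dp d th)"

definition Dtheta :: "nat \<Rightarrow> (nat \<Rightarrow> nat \<Rightarrow> real) \<Rightarrow> real" where
  "Dtheta d th = Rpdp d th / th d 0"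

end

theory Submission
  imports Defs
begin

lemma step_E:
  fixes n :: nat and S :: "real mat"
  assumes S: "S \<in> carrier_mat (2*n+1) (2*n+1)"
  defines "E \<equiv> mat (2*n+1) (2*n+1) (\<lambda>(r,k). (if k = r then (if r < n then real (Suc n) else 1) else 0)
                 + (if r < n \<and> k = r + n then -1 else 0))"
  shows "det (E * S) = real (Suc n) ^ n * det S"
proof -
  have Ec: "E \<in> carrier_mat (2*n+1) (2*n+1)" unfolding E_def by auto
  have ut: "upper_triangular E" unfolding upper_triangular_def E_def by auto
  have "det E = prod_list (diag_mat E)" by (rule det_upper_triangular[OF ut Ec])
  also have "\<dots> = (\<Prod>i<2*n+1. if i < n then real (Suc n) else 1)"
    unfolding diag_mat_def
    by (subst prod.distinct_set_conv_list[symmetric], simp, simp add: E_def atLeast0LessThan)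
  also have "\<dots> = real (Suc n) ^ n"
  proof -
    have "(\<Prod>i<2*n+1. if i < n then real (Suc n) else 1) = (\<Prod>i<n. real (Suc n))"
      by (intro prod.mono_neutral_cong_right) auto
    then show ?thesis by simp
  qed
  finally show ?thesis using det_mult[OF Ec S] by simp
qed

lemma step_E_entry:
  fixes n :: nat and S :: "real mat"
  assumes S: "S \<in> carrier_mat (2*n+1) (2*n+1)" and r: "r < 2*n+1" and c: "c < 2*n+1"
  defines "E \<equiv> mat (2*n+1) (2*n+1) (\<lambda>(r,k). (if k = r then (if r < n then real (Suc n) else 1) else 0)
                 + (if r < n \<and> k = r + n then -1 else 0))"
  shows "(E * S) $$ (r,c) = (if r < n then real (Suc n) * S $$ (r,c) - S $$ (r+n,c) else S $$ (r,c))"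
proof -
  have Ed: "dim_row E = 2*n+1" "dim_col E = 2*n+1" by (simp_all add: E_def)
  have "(E * S) $$ (r,c) = row E r \<bullet> col S c" using S r c Ed by simp
  also have "\<dots> = (\<Sum>k\<in>{0..<2*n+1}. row E r $ k * col S c $ k)"
    using S by (simp add: scalar_prod_def)
  also have "\<dots> = (\<Sum>k\<in>{0..<2*n+1}. E $$ (r,k) * S $$ (k,c))"
    using S r c Ed by (intro sum.cong refl) auto
  also have "\<dots> = (\<Sum>k\<in>{0..<2*n+1}. (if k = r then (if r < n then real (Suc n) else 1) * S $$ (k,c) else 0)
                 + (if r < n \<and> k = r + n then - S $$ (k,c) else 0))"
    using r by (intro sum.cong refl) (auto simp: E_def)
  also have "\<dots> = (if r < n then real (Suc n) * S $$ (r,c) - S $$ (r+n,c) else S $$ (r,c))"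
    using r by (simp add: sum.distrib sum.delta)
  finally show ?thesis .
qed

lemma theorem6p2_aux:
  fixes n :: nat and th :: "nat \<Rightarrow> nat \<Rightarrow> real"
  assumes n: "n \<ge> 1"
  shows "real (Suc n) ^ n * det (sylv_p_dp (Suc n) th) = real (Suc n) * th (Suc n) 0 * det (Pmat (Suc n) th)"
proof -
  define d where "d = Suc n"
  define S where "S = sylv_p_dp d th"
  have S: "S \<in> carrier_mat (2*n+1) (2*n+1)" unfolding S_def sylv_p_dp_def d_def by auto
  define E where "E \<equiv> mat (2*n+1) (2*n+1) (\<lambda>(r,k). (if k = r then (if r < n then real (Suc n) else 1) else 0)
                 + (if r < n \<and> k = r + n then -1 else 0))"
  define A where "A = mat (2*n+1) (2*n+1) (\<lambda>(r,c). if r < n then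
       (if r \<le> c \<and> c - r \<le> d then real (c - r) * th (d - (c - r)) (c - r) else 0) else S $$ (r,c))"
  have A: "A \<in> carrier_mat (2*n+1) (2*n+1)" unfolding A_def by auto
  have ES: "E * S = A"
  proof (rule eq_matI)
    fix r c assume r: "r < dim_row A" and c: "c < dim_col A"
    then have r': "r < 2*n+1" and c': "c < 2*n+1" unfolding A_def by auto
    show "(E * S) $$ (r,c) = A $$ (r,c)"
      unfolding E_def step_E_entry[OF S r' c']
      using r' c' apply (auto simp: A_def S_def sylv_p_dp_def d_def Let_def algebra_simps of_nat_diff)
      apply (subgoal_tac "real c = 1 + real n + real r")
       apply (simp add: algebra_simps)
      by linarith
  qed (insert S, auto simp: E_def A_def)
  have detA: "det A = real d ^ n * det S"
    using step_E[OF S] unfolding ES[symmetric] E_def d_def by simp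
  have lap: "det A = (\<Sum>i<2*n+1. A $$ (i,0) * cofactor A i 0)"
    by (rule laplace_expansion_column[OF A]) simp
  also have "\<dots> = A $$ (n,0) * cofactor A n 0"
  proof (rule sum.mono_neutral_cong_right[where S="{n}", simplified])
    have "A $$ (i,0) = 0" if "i < 2*n+1" "i \<noteq> n" for i
      using that unfolding A_def S_def sylv_p_dp_def d_def by (auto simp: Let_def)
    then show "\<forall>i\<in>{..<2*n+1} - {n}. A $$ (i,0) * cofactor A i 0 = 0"
      by auto
  qed auto
  also have "A $$ (n,0) = real d * th d 0"
    using n by (simp add: A_def S_def sylv_p_dp_def d_def)
  finally have detA2: "det A = real d * th d 0 * ((-1)^n * det (mat_delete A n 0))"
    by (simp add: cofactor_def)
  define M where "M = mat_delete A n 0"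
  have M: "M \<in> carrier_mat (n+n) (n+n)" unfolding M_def using A by (auto simp: mat_delete_def)
  have sw: "det M = (-1)^(n*n) * det (mat (n + n) (n + n) (\<lambda> (i,j).
    M $$ ((if i < n then i + n else i - n),j)))" by (rule det_swap_rows[OF M])
  have PM: "mat (n + n) (n + n) (\<lambda> (i,j). M $$ ((if i < n then i + n else i - n),j)) = Pmat d th"
  proof (rule eq_matI)
    fix i j assume i: "i < dim_row (Pmat d th)" and j: "j < dim_col (Pmat d th)"
    then have i': "i < n + n" and j': "j < n + n" by (auto simp: Pmat_def d_def)
    show "mat (n + n) (n + n) (\<lambda> (i,j). M $$ ((if i < n then i + n else i - n),j)) $$ (i,j) = Pmat d th $$ (i,j)"
      using i' j' A by (auto simp: M_def mat_delete_def A_def S_def sylv_p_dp_def Pmat_def d_def Let_def Suc_diff_le le_diff_conv)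
  qed (auto simp: Pmat_def d_def)
  have "(-1::real)^n * (-1)^(n*n) = 1"
  proof -
    have "even (n + n*n)" by simp
    then show ?thesis by (simp add: power_add[symmetric])
  qed
  then have "det A = real d * th d 0 * det (Pmat d th)"
    unfolding detA2 M_def[symmetric] sw PM by (simp add: algebra_simps)
  then show ?thesis using detA unfolding S_def d_def by simp
qed

theorem theorem6p2:
  fixes d :: nat and th :: "nat \<Rightarrow> nat \<Rightarrow> real"
  assumes "d \<ge> 2" and "th d 0 \<noteq> 0"
  shows "det (Pmat d th) = real d ^ (d - 2) * Dtheta d th"
proof -
  obtain n where dn: "d = Suc n" and n: "n \<ge> 1" using assms(1) by (cases d) auto
  obtain k where nk: "n = Suc k" using n by (cases n) auto
  have h: "real d ^ n * det (sylv_p_dp d th) = real d * th d 0 * det (Pmat d th)"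
    using theorem6p2_aux[OF n, of th] unfolding dn .
  have "real d * (real d ^ k * det (sylv_p_dp d th)) = real d * (th d 0 * det (Pmat d th))"
    using h unfolding nk by (simp add: algebra_simps)
  then have "real d ^ k * det (sylv_p_dp d th) = th d 0 * det (Pmat d th)"
    using dn by simp
  then show ?thesis
    using assms(2) unfolding Dtheta_def Rpdp_def dn nk
    by (simp add: field_simps)
qed

end
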